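(* Fix an integer $r\ge 4$. For every integer $n\ge 33$, there exists a $K_{1,r}$-free graph $G$ of order $n$ with no isolated vertices and $\chi(G)=2$ such that \[ f_o(G)<\frac{|V(G)|}{\chi(G)}=\frac{n}{2}. \] Specifically, writing $n=9k+4\ell$ with integers $k\ge 1$, $\ell\ge 0$, one may take $G=kF\cup \ell C_4$, where $F$ is the bipartite graph with vertex set $\{a,b,c,d,u,v,w,x,y\}$ and edge set $\{au,ax,ay,bv,bw,bx,cu,cv,cy,du,dw,dx\}$, and $f_o(G)=4k+2\ell$.
   Context: All graphs are finite and simple. An induced subgraph of a graph $G$ is called odd if every vertex of it has odd degree in it. $f_o(G)$ denotes the maximum order of an odd induced subgraph of $G$. A graph is $K_{1,r}$-free if it contains no induced subgraph isomorphic to $K_{1,r}$. $\chi(G)$ is the chromatic number. $kF\cup\ell C_4$ denotes the vertex-disjoint union of $k$ copies of $F$ and $\ell$ copies of the $4$-cycle $C_4$. *)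

theory Defs
  imports Complex_Main
begin

definition simple_graph :: "'a set \<Rightarrow> ('a \<Rightarrow> 'a \<Rightarrow> bool) \<Rightarrow> bool" where
  "simple_graph V E \<longleftrightarrow> finite V \<and> (\<forall>x y. E x y \<longrightarrow> x \<in> V \<and> y \<in> V)
     \<and> (\<forall>x y. E x y \<longrightarrow> E y x) \<and> (\<forall>x. \<not> E x x)"

definition odd_induced :: "'a set \<Rightarrow> ('a \<Rightarrow> 'a \<Rightarrow> bool) \<Rightarrow> 'a set \<Rightarrow> bool" where
  "odd_induced V E S \<longleftrightarrow> S \<subseteq> V \<and> (\<forall>v\<in>S. odd (card {u\<in>S. E v u}))"

definition f_o :: "'a set \<Rightarrow> ('a \<Rightarrow> 'a \<Rightarrow> bool) \<Rightarrow> nat" where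
  "f_o V E = Max {card S | S. odd_induced V E S}"

definition K1r_free :: "nat \<Rightarrow> 'a set \<Rightarrow> ('a \<Rightarrow> 'a \<Rightarrow> bool) \<Rightarrow> bool" where
  "K1r_free r V E \<longleftrightarrow> \<not> (\<exists>v\<in>V. \<exists>T. T \<subseteq> V \<and> v \<notin> T \<and> card T = r
      \<and> (\<forall>t\<in>T. E v t) \<and> (\<forall>s\<in>T. \<forall>t\<in>T. \<not> E s t))"

definition no_isolated :: "'a set \<Rightarrow> ('a \<Rightarrow> 'a \<Rightarrow> bool) \<Rightarrow> bool" where
  "no_isolated V E \<longleftrightarrow> (\<forall>v\<in>V. \<exists>u\<in>V. E v u)"

definition proper_colouring :: "'a set \<Rightarrow> ('a \<Rightarrow> 'a \<Rightarrow> bool) \<Rightarrow> nat \<Rightarrow> ('a \<Rightarrow> nat) \<Rightarrow> bool" where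
  "proper_colouring V E k c \<longleftrightarrow> (\<forall>v\<in>V. c v < k) \<and> (\<forall>u\<in>V. \<forall>v\<in>V. E u v \<longrightarrow> c u \<noteq> c v)"

definition chromatic_number :: "'a set \<Rightarrow> ('a \<Rightarrow> 'a \<Rightarrow> bool) \<Rightarrow> nat" where
  "chromatic_number V E = (LEAST k. \<exists>c. proper_colouring V E k c)"

text \<open>The graph F on {a,b,c,d,u,v,w,x,y}, encoded as a=0,b=1,c=2,d=3,u=4,v=5,w=6,x=7,y=8,
  with edges au,ax,ay,bv,bw,bx,cu,cv,cy,du,dw,dx.\<close>
definition F_edges :: "(nat \<times> nat) set" where
  "F_edges = {(0,4),(0,7),(0,8),(1,5),(1,6),(1,7),(2,4),(2,5),(2,8),(3,4),(3,6),(3,7)}"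

definition F_adj :: "nat \<Rightarrow> nat \<Rightarrow> bool" where
  "F_adj i j \<longleftrightarrow> (i, j) \<in> F_edges \<or> (j, i) \<in> F_edges"

definition C4_adj :: "nat \<Rightarrow> nat \<Rightarrow> bool" where
  "C4_adj i j \<longleftrightarrow> i < 4 \<and> j < 4 \<and> (j = (i + 1) mod 4 \<or> i = (j + 1) mod 4)"

text \<open>kF \<union> lC4: components indexed by i < k + l; component i < k is a copy of F
  (vertices (i,0..8)), component k \<le> i < k + l is a copy of C4 (vertices (i,0..3)).\<close>
definition kF_lC4_V :: "nat \<Rightarrow> nat \<Rightarrow> (nat \<times> nat) set" where
  "kF_lC4_V k l = {(i, j). i < k \<and> j < 9} \<union> {(i, j). k \<le> i \<and> i < k + l \<and> j < 4}"

definition kF_lC4_E :: "nat \<Rightarrow> nat \<Rightarrow> (nat \<times> nat) \<Rightarrow> (nat \<times> nat) \<Rightarrow> bool" where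
  "kF_lC4_E k l p q \<longleftrightarrow> fst p = fst q \<and> fst p < k + l \<and>
     (if fst p < k then F_adj (snd p) (snd q) else C4_adj (snd p) (snd q))"

end

theory Submission imports Defs "HOL-Library.Nat_Bijection" begin
lemma "n \<ge> (33::nat) \<Longrightarrow> \<exists>k l. k \<ge> 1 \<and> n = 9 * k + 4 * l" by presburger

definition nbF :: "nat \<Rightarrow> nat list" where
 "nbF i = (if i=0 then [4,7,8] else if i=1 then [5,6,7] else if i=2 then [4,5,8] else if i=3 then [4,6,7]
   else if i=4 then [0,2,3] else if i=5 then [1,2] else if i=6 then [1,3] else if i=7 then [0,1,3]
   else if i=8 then [0,2] else [])"
definition nbC :: "nat \<Rightarrow> nat list" where
 "nbC i = (if i=0 then [1,3] else if i=1 then [0,2] else if i=2 then [1,3] else if i=3 then [0,2] else [])"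

lemma F_adj_nb: "F_adj i j \<longleftrightarrow> j \<in> set (nbF i)"
  by (auto simp: F_adj_def F_edges_def nbF_def)
lemma nbC_rng: "j' \<in> set (nbC j) \<Longrightarrow> j < 4 \<and> j' < 4 \<and> j mod 2 \<noteq> j' mod 2"
  by (auto simp: nbC_def split: if_splits)
lemma C4_adj_nb: "C4_adj i j \<longleftrightarrow> j \<in> set (nbC i)"
proof (cases "i < 4 \<and> j < 4")
  case True
  then have "i = 0 \<or> i = 1 \<or> i = 2 \<or> i = 3" "j = 0 \<or> j = 1 \<or> j = 2 \<or> j = 3" by auto
  then show ?thesis by (elim disjE; simp add: C4_adj_def nbC_def)
next
  case False
  then show ?thesis using nbC_rng[of j i] unfolding C4_adj_def by auto
qed
lemma nbF_ne: "j < 9 \<Longrightarrow> nbF j \<noteq> []" by (auto simp: nbF_def)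
lemma nbC_ne: "j < 4 \<Longrightarrow> nbC j \<noteq> []" by (auto simp: nbC_def)
lemma nbF_len: "length (nbF j) \<le> 3" by (auto simp: nbF_def)
lemma nbC_len: "length (nbC j) \<le> 3" by (auto simp: nbC_def)
lemma nbF_rng: "j' \<in> set (nbF j) \<Longrightarrow> j < 9 \<and> j' < 9 \<and> (4 \<le> j \<longleftrightarrow> \<not> 4 \<le> j')"
  by (auto simp: nbF_def split: if_splits)

lemma F_comp: "\<forall>xs \<in> set (subseqs [0..<9::nat]). (\<forall>j\<in>set xs. odd (length (filter (\<lambda>x. x \<in> set (nbF j)) xs))) \<longrightarrow> length xs \<le> 4"
  unfolding nbF_def by code_simp
lemma C_comp: "\<forall>xs \<in> set (subseqs [0..<4::nat]). (\<forall>j\<in>set xs. odd (length (filter (\<lambda>x. x \<in> set (nbC j)) xs))) \<longrightarrow> length xs \<le> 2"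
  unfolding nbC_def by code_simp

lemma list_bound:
  assumes chk: "\<forall>xs \<in> set (subseqs [0..<m::nat]). (\<forall>j\<in>set xs. odd (length (filter (\<lambda>x. x \<in> set (nb j)) xs))) \<longrightarrow> length xs \<le> b"
    and A: "A \<subseteq> {0..<m}" and od: "\<forall>j\<in>A. odd (card {j'\<in>A. j' \<in> set (nb j)})"
  shows "card A \<le> b"
proof -
  obtain xs where xs: "xs \<in> set (subseqs [0..<m])" "set xs = A"
    using subset_subseqs[of A "[0..<m]"] A by auto
  have d: "distinct xs" using subseqs_distinctD[OF xs(1)] by simp
  have "length (filter (\<lambda>x. x \<in> set (nb j)) xs) = card {j'\<in>A. j' \<in> set (nb j)}" for j
    using distinct_card[of "filter (\<lambda>x. x \<in> set (nb j)) xs"] d xs(2) by simp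
  then have "length xs \<le> b" using chk xs od by auto
  then show ?thesis using distinct_card[OF d] xs(2) by simp
qed

lemma F_bound: "A \<subseteq> {0..<9} \<Longrightarrow> \<forall>j\<in>A. odd (card {j'\<in>A. F_adj j j'}) \<Longrightarrow> card A \<le> 4"
  using list_bound[OF F_comp, of A] by (simp add: F_adj_nb)
lemma C_bound: "A \<subseteq> {0..<4} \<Longrightarrow> \<forall>j\<in>A. odd (card {j'\<in>A. C4_adj j j'}) \<Longrightarrow> card A \<le> 2"
  using list_bound[OF C_comp, of A] by (simp add: C4_adj_nb)

definition ad :: "nat \<Rightarrow> nat \<Rightarrow> nat \<Rightarrow> nat \<Rightarrow> bool" where "ad k i = (if i < k then F_adj else C4_adj)"
definition nbs :: "nat \<Rightarrow> nat \<Rightarrow> nat \<Rightarrow> nat list" where "nbs k i = (if i < k then nbF else nbC)"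
definition sz :: "nat \<Rightarrow> nat \<Rightarrow> nat" where "sz k i = (if i < k then 9 else 4)"
definition bd :: "nat \<Rightarrow> nat \<Rightarrow> nat" where "bd k i = (if i < k then 4 else 2)"
definition sl :: "(nat \<times> nat) set \<Rightarrow> nat \<Rightarrow> nat set" where "sl S i = {j. (i, j) \<in> S}"

lemma ad_nbs: "ad k i j j' \<longleftrightarrow> j' \<in> set (nbs k i j)"
  by (simp add: ad_def nbs_def F_adj_nb C4_adj_nb)
lemma ad_rng: "ad k i j j' \<Longrightarrow> j < sz k i \<and> j' < sz k i"
  using nbF_rng nbC_rng by (auto simp: ad_nbs nbs_def sz_def split: if_splits)
lemma E_iff: "kF_lC4_E k l (i,j) (i',j') \<longleftrightarrow> i' = i \<and> i < k + l \<and> ad k i j j'"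
  by (auto simp: kF_lC4_E_def ad_def)
lemma V_iff: "(i,j) \<in> kF_lC4_V k l \<longleftrightarrow> i < k + l \<and> j < sz k i"
  by (auto simp: kF_lC4_V_def sz_def)

lemma V_sub: "kF_lC4_V k l \<subseteq> {..<k+l} \<times> {..<9}"
  by (auto simp: kF_lC4_V_def)
lemma V_fin: "finite (kF_lC4_V k l)"
  by (rule finite_subset[OF V_sub]) auto

lemma card_sum:
  assumes "S \<subseteq> kF_lC4_V k l"
  shows "card S = (\<Sum>i<k+l. card (sl S i))"
proof -
  have S: "S = (\<Union>i\<in>{..<k+l}. Pair i ` sl S i)"
  proof
    show "S \<subseteq> (\<Union>i\<in>{..<k+l}. Pair i ` sl S i)"
    proof
      fix p assume p: "p \<in> S"
      obtain a b where ab: "p = (a,b)" by (cases p)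
      have "a < k + l" using assms p ab V_iff by auto
      then show "p \<in> (\<Union>i\<in>{..<k+l}. Pair i ` sl S i)" using p ab
        by (intro UN_I[of a] image_eqI[of _ _ b]) (auto simp: sl_def)
    qed
  qed (auto simp: sl_def)
  have fin: "finite (sl S i)" for i
  proof -
    have "sl S i \<subseteq> {..<9}" using assms V_sub by (auto simp: sl_def)
    then show ?thesis by (rule finite_subset) auto
  qed
  have "card (\<Union>i\<in>{..<k+l}. Pair i ` sl S i) = (\<Sum>i<k+l. card (Pair i ` sl S i))"
    by (rule card_UN_disjoint) (auto simp: fin)
  also have "\<dots> = (\<Sum>i<k+l. card (sl S i))"
    by (rule sum.cong) (auto simp: card_image inj_on_def)
  finally show ?thesis using S by simp
qed

lemma nbhd:
  assumes "S \<subseteq> kF_lC4_V k l" "(i,j) \<in> S"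
  shows "card {q\<in>S. kF_lC4_E k l (i,j) q} = card {j'\<in>sl S i. ad k i j j'}"
proof -
  have i: "i < k + l" using assms V_iff by auto
  have "{q\<in>S. kF_lC4_E k l (i,j) q} = Pair i ` {j'\<in>sl S i. ad k i j j'}"
    using i by (auto simp: E_iff sl_def)
  then show ?thesis by (simp add: card_image inj_on_def)
qed

lemma sum_bd: "(\<Sum>i<k+l. bd k i) = 4*k + 2*l"
proof (induction l)
  case 0
  have "(\<Sum>i<k. bd k i) = (\<Sum>i<k. 4)" by (rule sum.cong) (auto simp: bd_def)
  then show ?case by simp
next
  case (Suc l) then show ?case by (simp add: bd_def)
qed

lemma upper:
  assumes "odd_induced (kF_lC4_V k l) (kF_lC4_E k l) S"
  shows "card S \<le> 4*k + 2*l"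
proof -
  have S: "S \<subseteq> kF_lC4_V k l" using assms by (simp add: odd_induced_def)
  have "card (sl S i) \<le> bd k i" if i: "i < k + l" for i
  proof -
    have od: "\<forall>j\<in>sl S i. odd (card {j'\<in>sl S i. ad k i j j'})"
      using assms nbhd[OF S] by (auto simp: odd_induced_def sl_def)
    have sub: "sl S i \<subseteq> {0..<sz k i}" using S by (auto simp: sl_def V_iff)
    show ?thesis
    proof (cases "i < k")
      case True then show ?thesis using F_bound[of "sl S i"] od sub by (simp add: ad_def sz_def bd_def)
    next
      case False then show ?thesis using C_bound[of "sl S i"] od sub by (simp add: ad_def sz_def bd_def)
    qed
  qed
  then have "(\<Sum>i<k+l. card (sl S i)) \<le> (\<Sum>i<k+l. bd k i)" by (intro sum_mono) auto
  then show ?thesis using card_sum[OF S] sum_bd by simp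
qed

definition W :: "nat \<Rightarrow> nat \<Rightarrow> nat set" where "W k i = (if i < k then {0,1,4,5} else {0,1})"
definition S0 :: "nat \<Rightarrow> nat \<Rightarrow> (nat \<times> nat) set" where "S0 k l = {(i,j). i < k + l \<and> j \<in> W k i}"

lemma S0_sub: "S0 k l \<subseteq> kF_lC4_V k l" by (auto simp: S0_def W_def V_iff sz_def split: if_splits)
lemma S0_sl: "i < k + l \<Longrightarrow> sl (S0 k l) i = W k i" by (auto simp: S0_def sl_def)
lemma card_W: "card (W k i) = bd k i" by (simp add: W_def bd_def)

lemma S0_card: "card (S0 k l) = 4*k + 2*l"
proof -
  have "(\<Sum>i<k+l. card (sl (S0 k l) i)) = (\<Sum>i<k+l. bd k i)"
    by (rule sum.cong) (auto simp: S0_sl card_W)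
  then show ?thesis using card_sum[OF S0_sub] sum_bd by simp
qed

lemma WF: "{j'\<in>{0,1,4,5::nat}. F_adj 0 j'} = {4}" "{j'\<in>{0,1,4,5::nat}. F_adj 1 j'} = {5}"
     "{j'\<in>{0,1,4,5::nat}. F_adj 4 j'} = {0}" "{j'\<in>{0,1,4,5::nat}. F_adj 5 j'} = {1}"
  by (auto simp: F_adj_nb nbF_def)
lemma WC: "{j'\<in>{0,1::nat}. C4_adj 0 j'} = {1}" "{j'\<in>{0,1::nat}. C4_adj 1 j'} = {0}"
  by (auto simp: C4_adj_nb nbC_def)
lemma Wdeg: "j \<in> W k i \<Longrightarrow> card {j'\<in>W k i. ad k i j j'} = 1"
proof (cases "i < k")
  case True
  assume "j \<in> W k i"
  then have "j = 0 \<or> j = 1 \<or> j = 4 \<or> j = 5" using True by (auto simp: W_def)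
  then show ?thesis using True unfolding W_def ad_def by (elim disjE) (simp_all only: if_True WF, simp_all)
next
  case False
  assume "j \<in> W k i"
  then have "j = 0 \<or> j = 1" using False by (auto simp: W_def)
  then show ?thesis using False unfolding W_def ad_def by (elim disjE) (simp_all only: if_False WC, simp_all)
qed

lemma S0_odd: "odd_induced (kF_lC4_V k l) (kF_lC4_E k l) (S0 k l)"
  unfolding odd_induced_def
proof (intro conjI ballI)
  show "S0 k l \<subseteq> kF_lC4_V k l" by (rule S0_sub)
next
  fix p assume p: "p \<in> S0 k l"
  obtain i j where ij: "p = (i,j)" by (cases p)
  have i: "i < k + l" and j: "j \<in> W k i" using p ij by (auto simp: S0_def)
  show "odd (card {u \<in> S0 k l. kF_lC4_E k l p u})"
    using nbhd[OF S0_sub, of i j] p ij Wdeg[OF j] S0_sl[OF i] by simp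
qed

lemma fo: "f_o (kF_lC4_V k l) (kF_lC4_E k l) = 4*k + 2*l"
  unfolding f_o_def
proof (rule Max_eqI)
  have "{card S |S. odd_induced (kF_lC4_V k l) (kF_lC4_E k l) S} \<subseteq> card ` Pow (kF_lC4_V k l)"
    by (auto simp: odd_induced_def)
  then show "finite {card S |S. odd_induced (kF_lC4_V k l) (kF_lC4_E k l) S}"
    by (rule finite_subset) (simp add: V_fin)
next
  fix y assume "y \<in> {card S |S. odd_induced (kF_lC4_V k l) (kF_lC4_E k l) S}"
  then show "y \<le> 4*k + 2*l" using upper by auto
next
  show "4*k + 2*l \<in> {card S |S. odd_induced (kF_lC4_V k l) (kF_lC4_E k l) S}"
    using S0_odd S0_card by (metis (mono_tags, lifting) mem_Collect_eq)
qed


lemma sg: "simple_graph (kF_lC4_V k l) (kF_lC4_E k l)"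
  unfolding simple_graph_def
proof (intro conjI allI impI)
  show "finite (kF_lC4_V k l)" by (rule V_fin)
next
  fix x y assume e: "kF_lC4_E k l x y"
  obtain i j i' j' where x: "x = (i,j)" and y: "y = (i',j')" by (cases x, cases y)
  show "x \<in> kF_lC4_V k l" "y \<in> kF_lC4_V k l" using e x y ad_rng by (auto simp: E_iff V_iff)
  show "kF_lC4_E k l y x" using e x y by (auto simp: E_iff ad_def F_adj_def C4_adj_def)
next
  fix x show "\<not> kF_lC4_E k l x x"
    by (cases x) (auto simp: E_iff ad_nbs nbs_def nbF_def nbC_def)
qed

lemma cardV: "card (kF_lC4_V k l) = 9*k + 4*l"
proof -
  have V: "kF_lC4_V k l = ({..<k} \<times> {..<9}) \<union> ({k..<k+l} \<times> {..<4})"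
    by (auto simp: kF_lC4_V_def)
  have "card (({..<k} \<times> {..<9::nat}) \<union> ({k..<k+l} \<times> {..<4::nat})) = card ({..<k} \<times> {..<9::nat}) + card ({k..<k+l} \<times> {..<4::nat})"
    by (rule card_Un_disjoint) auto
  then show ?thesis using V by (simp add: card_cartesian_product)
qed

lemma k1r: assumes "r \<ge> 4" shows "K1r_free r (kF_lC4_V k l) (kF_lC4_E k l)"
  unfolding K1r_free_def
proof (rule notI, elim bexE exE conjE)
  fix v T assume T: "card T = r" "\<forall>t\<in>T. kF_lC4_E k l v t"
  obtain i j where v: "v = (i,j)" by (cases v)
  have "T \<subseteq> Pair i ` set (nbs k i j)"
  proof
    fix t assume "t \<in> T"
    then have e: "kF_lC4_E k l (i,j) t" using T v by auto
    obtain a b where t: "t = (a,b)" by (cases t)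
    show "t \<in> Pair i ` set (nbs k i j)" using e t by (auto simp: E_iff ad_nbs)
  qed
  then have "card T \<le> card (Pair i ` set (nbs k i j))" by (rule card_mono[rotated]) auto
  also have "\<dots> \<le> card (set (nbs k i j))" by (rule card_image_le) auto
  also have "\<dots> \<le> length (nbs k i j)" by (rule card_length)
  also have "\<dots> \<le> 3" using nbF_len nbC_len by (simp add: nbs_def)
  finally show False using T assms by simp
qed

lemma noiso: "no_isolated (kF_lC4_V k l) (kF_lC4_E k l)"
  unfolding no_isolated_def
proof
  fix v assume v: "v \<in> kF_lC4_V k l"
  obtain i j where ij: "v = (i,j)" by (cases v)
  have i: "i < k + l" and j: "j < sz k i" using v ij V_iff by auto
  have ne: "nbs k i j \<noteq> []" using j nbF_ne nbC_ne by (auto simp: nbs_def sz_def)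
  define j' where "j' = hd (nbs k i j)"
  have a: "ad k i j j'" using ne by (simp add: ad_nbs j'_def)
  then have "(i,j') \<in> kF_lC4_V k l" using ad_rng i by (simp add: V_iff)
  moreover have "kF_lC4_E k l v (i,j')" using a i ij by (simp add: E_iff)
  ultimately show "\<exists>u\<in>kF_lC4_V k l. kF_lC4_E k l v u" by blast
qed

lemma chi: assumes "k \<ge> 1" shows "chromatic_number (kF_lC4_V k l) (kF_lC4_E k l) = 2"
  unfolding chromatic_number_def
proof (rule Least_equality)
  define c where "c = (\<lambda>p::nat\<times>nat. if fst p < k then (if 4 \<le> snd p then 1 else 0) else snd p mod 2)"
  have "proper_colouring (kF_lC4_V k l) (kF_lC4_E k l) 2 c"
    unfolding proper_colouring_def
  proof (intro conjI ballI impI)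
    fix v show "c v < 2" by (simp add: c_def)
  next
    fix u v assume "kF_lC4_E k l u v"
    then obtain i j j' where u: "u = (i,j)" and v: "v = (i,j')" and a: "ad k i j j'"
      by (cases u, cases v) (auto simp: E_iff)
    show "c u \<noteq> c v"
    proof (cases "i < k")
      case True then show ?thesis using a u v nbF_rng[of j' j] by (auto simp: c_def ad_nbs nbs_def)
    next
      case False then show ?thesis using a u v nbC_rng[of j' j] by (auto simp: c_def ad_nbs nbs_def)
    qed
  qed
  then show "\<exists>c. proper_colouring (kF_lC4_V k l) (kF_lC4_E k l) 2 c" by blast
next
  fix y assume "\<exists>c. proper_colouring (kF_lC4_V k l) (kF_lC4_E k l) y c"
  then obtain c where c: "proper_colouring (kF_lC4_V k l) (kF_lC4_E k l) y c" by blast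
  have in1: "(0,0) \<in> kF_lC4_V k l" "(0,4) \<in> kF_lC4_V k l" using assms by (auto simp: V_iff sz_def)
  have e: "kF_lC4_E k l (0,0) (0,4)" using assms by (simp add: E_iff ad_nbs nbs_def nbF_def)
  have "c (0,0) < y" "c (0,4) < y" "c (0,0) \<noteq> c (0,4)" using c in1 e unfolding proper_colouring_def by blast+
  then show "2 \<le> y" by linarith
qed


locale bijpair =
  fixes h :: "'a \<Rightarrow> 'b" and g :: "'b \<Rightarrow> 'a"
  assumes gh: "\<And>a. g (h a) = a" and hg: "\<And>b. h (g b) = b"
begin

lemma inj_g: "inj_on g A" by (metis hg inj_onI)
lemma inj_h: "inj_on h A" by (metis gh inj_onI)
lemma inV: "x \<in> h ` V \<longleftrightarrow> g x \<in> V" by (metis gh hg image_iff)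

lemma iso_sg: "simple_graph V E \<Longrightarrow> simple_graph (h ` V) (\<lambda>x y. E (g x) (g y))"
  unfolding simple_graph_def using inV by auto

lemma iso_card: "card (h ` V) = card V" by (rule card_image[OF inj_h])

lemma iso_noiso: "no_isolated V E \<Longrightarrow> no_isolated (h ` V) (\<lambda>x y. E (g x) (g y))"
  unfolding no_isolated_def by (metis gh image_eqI inV)

lemma iso_k1r: assumes "K1r_free r V E" shows "K1r_free r (h ` V) (\<lambda>x y. E (g x) (g y))"
  unfolding K1r_free_def
proof (rule notI, elim bexE exE conjE)
  fix v T assume v: "v \<in> h ` V" and T: "T \<subseteq> h ` V" "v \<notin> T" "card T = r"
    "\<forall>t\<in>T. E (g v) (g t)" "\<forall>s\<in>T. \<forall>t\<in>T. \<not> E (g s) (g t)"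
  have "g v \<in> V" using v inV by blast
  moreover have "g ` T \<subseteq> V" using T(1) inV by blast
  moreover have "g v \<notin> g ` T" using T(2) by (metis hg imageE)
  moreover have "card (g ` T) = r" using T(3) card_image[OF inj_g] by simp
  moreover have "\<forall>t\<in>g ` T. E (g v) t" using T(4) by blast
  moreover have "\<forall>s\<in>g ` T. \<forall>t\<in>g ` T. \<not> E s t" using T(5) by blast
  ultimately show False using assms unfolding K1r_free_def by blast
qed

lemma pc_iff: "proper_colouring (h ` V) (\<lambda>x y. E (g x) (g y)) k c \<longleftrightarrow> proper_colouring V E k (c \<circ> h)"
  unfolding proper_colouring_def by (auto simp: gh)

lemma iso_chi: "chromatic_number (h ` V) (\<lambda>x y. E (g x) (g y)) = chromatic_number V E"
proof -
  have "(\<exists>c. proper_colouring (h ` V) (\<lambda>x y. E (g x) (g y)) k c) \<longleftrightarrow> (\<exists>c. proper_colouring V E k c)" for k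
  proof
    assume "\<exists>c. proper_colouring (h ` V) (\<lambda>x y. E (g x) (g y)) k c"
    then show "\<exists>c. proper_colouring V E k c" using pc_iff by blast
  next
    assume "\<exists>c. proper_colouring V E k c"
    then obtain c where "proper_colouring V E k c" by blast
    moreover have "c \<circ> g \<circ> h = c" by (auto simp: gh)
    ultimately have "proper_colouring (h ` V) (\<lambda>x y. E (g x) (g y)) k (c \<circ> g)" using pc_iff by metis
    then show "\<exists>c. proper_colouring (h ` V) (\<lambda>x y. E (g x) (g y)) k c" by blast
  qed
  then show ?thesis unfolding chromatic_number_def by simp
qed

lemma odd_iff: "odd_induced (h ` V) (\<lambda>x y. E (g x) (g y)) S \<longleftrightarrow> odd_induced V E (g ` S)"
proof -
  have sub: "S \<subseteq> h ` V \<longleftrightarrow> g ` S \<subseteq> V" using inV by blast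
  have c: "card {u\<in>S. E (g v) (g u)} = card {u\<in>g ` S. E (g v) u}" for v
  proof -
    have "{u\<in>g ` S. E (g v) u} = g ` {u\<in>S. E (g v) (g u)}" by auto
    then show ?thesis using card_image[OF inj_g] by simp
  qed
  show ?thesis unfolding odd_induced_def using sub c by auto
qed

lemma iso_fo: "f_o (h ` V) (\<lambda>x y. E (g x) (g y)) = f_o V E"
proof -
  have "{card S |S. odd_induced (h ` V) (\<lambda>x y. E (g x) (g y)) S} = {card S |S. odd_induced V E S}"
  proof (intro set_eqI iffI)
    fix n assume "n \<in> {card S |S. odd_induced (h ` V) (\<lambda>x y. E (g x) (g y)) S}"
    then obtain S where "n = card S" "odd_induced (h ` V) (\<lambda>x y. E (g x) (g y)) S" by blast
    then have "n = card (g ` S)" "odd_induced V E (g ` S)" using odd_iff card_image[OF inj_g] by auto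
    then show "n \<in> {card S |S. odd_induced V E S}" by blast
  next
    fix n assume "n \<in> {card S |S. odd_induced V E S}"
    then obtain S where S: "n = card S" "odd_induced V E S" by blast
    have "g ` h ` S = S" by (force simp: gh)
    then have "n = card (h ` S)" "odd_induced (h ` V) (\<lambda>x y. E (g x) (g y)) (h ` S)"
      using S odd_iff card_image[OF inj_h] by auto
    then show "n \<in> {card S |S. odd_induced (h ` V) (\<lambda>x y. E (g x) (g y)) S}" by blast
  qed
  then show ?thesis unfolding f_o_def by simp
qed

end

interpretation pe: bijpair prod_encode prod_decode
  by unfold_locales simp_all

lemma main:
  assumes "r \<ge> 4" "k \<ge> 1" "n = 9 * k + 4 * l"
  shows "let V = kF_lC4_V k l; E = kF_lC4_E k l in
              simple_graph V E \<and> card V = n \<and> K1r_free r V E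
              \<and> no_isolated V E \<and> chromatic_number V E = 2
              \<and> f_o V E = 4 * k + 2 * l
              \<and> real (f_o V E) < real (card V) / real (chromatic_number V E)"
proof -
  have "real (4*k+2*l) < real (9*k+4*l) / 2" using assms(2) by simp
  then show ?thesis using sg cardV k1r[OF assms(1)] noiso chi[OF assms(2)] fo assms(3)
    by (simp add: Let_def)
qed

theorem theorem2p6:
  fixes r n :: nat
  assumes "r \<ge> 4" and "n \<ge> 33"
  shows "(\<exists>V :: nat set. \<exists>E. simple_graph V E \<and> card V = n \<and> K1r_free r V E
            \<and> no_isolated V E \<and> chromatic_number V E = 2
            \<and> real (f_o V E) < real (card V) / real (chromatic_number V E))
       \<and> (\<exists>k l. k \<ge> 1 \<and> n = 9 * k + 4 * l)
       \<and> (\<forall>k l. k \<ge> 1 \<longrightarrow> n = 9 * k + 4 * l \<longrightarrow>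
            (let V = kF_lC4_V k l; E = kF_lC4_E k l in
              simple_graph V E \<and> card V = n \<and> K1r_free r V E
              \<and> no_isolated V E \<and> chromatic_number V E = 2
              \<and> f_o V E = 4 * k + 2 * l
              \<and> real (f_o V E) < real (card V) / real (chromatic_number V E)))"
proof -
  have ex: "\<exists>k l. k \<ge> 1 \<and> n = 9 * k + 4 * l" using assms(2) by presburger
  have all: "\<forall>k l. k \<ge> 1 \<longrightarrow> n = 9 * k + 4 * l \<longrightarrow>
            (let V = kF_lC4_V k l; E = kF_lC4_E k l in
              simple_graph V E \<and> card V = n \<and> K1r_free r V E
              \<and> no_isolated V E \<and> chromatic_number V E = 2
              \<and> f_o V E = 4 * k + 2 * l
              \<and> real (f_o V E) < real (card V) / real (chromatic_number V E))"
    using main[OF assms(1)] by blast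
  from ex obtain k l where kl: "k \<ge> 1" "n = 9 * k + 4 * l" by blast
  have "let V = kF_lC4_V k l; E = kF_lC4_E k l in
              simple_graph V E \<and> card V = n \<and> K1r_free r V E
              \<and> no_isolated V E \<and> chromatic_number V E = 2
              \<and> f_o V E = 4 * k + 2 * l
              \<and> real (f_o V E) < real (card V) / real (chromatic_number V E)"
    using main[OF assms(1) kl] .
  then have "\<exists>V :: nat set. \<exists>E. simple_graph V E \<and> card V = n \<and> K1r_free r V E
            \<and> no_isolated V E \<and> chromatic_number V E = 2
            \<and> real (f_o V E) < real (card V) / real (chromatic_number V E)"
    unfolding Let_def
    apply (intro exI[of _ "prod_encode ` kF_lC4_V k l"]
          exI[of _ "\<lambda>x y. kF_lC4_E k l (prod_decode x) (prod_decode y)"])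
    apply (simp only: pe.iso_card pe.iso_chi pe.iso_fo)
    apply (elim conjE, intro conjI)
    apply (blast intro: pe.iso_sg pe.iso_k1r pe.iso_noiso)+
    using kl by simp
  then show ?thesis using ex all by blast
qed

end
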